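(* Let $\mathbb{X},\mathbb{Y}$ be real Banach spaces, $A\subseteq\mathbb{X}$, and $T:\mathbb{X}\to\mathbb{Y}$ a bounded linear operator that preserves Birkhoff–James orthogonality at each point of $A$. Then $T$ preserves Birkhoff–James orthogonality at each point of $\overline{A}\cap\operatorname{Sm}\mathbb{X}$.
   Context: $u\perp_B v$ (Birkhoff–James orthogonality) means $\|u+\lambda v\|\ge\|u\|$ for all $\lambda\in\mathbb{R}$. $T$ preserves Birkhoff–James orthogonality at $x$ if $x\perp_B v$ implies $Tx\perp_B Tv$ for all $v\in\mathbb{X}$. For non-zero $z$, $J(z)=\{f\in\mathbb{X}^*:\|f\|=1,\ f(z)=\|z\|\}$; $z$ is smooth if $J(z)$ is a singleton, and $\operatorname{Sm}\mathbb{X}$ denotes the set of all smooth points of $\mathbb{X}$. $\overline{A}$ is the norm closure. *)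

theory Defs
  imports "HOL-Analysis.Analysis"
begin

definition bj_orth :: "'a::real_normed_vector \<Rightarrow> 'a \<Rightarrow> bool" where
  "bj_orth u v \<longleftrightarrow> (\<forall>t::real. norm (u + t *\<^sub>R v) \<ge> norm u)"

definition preserves_bj_at ::
  "('a::real_normed_vector \<Rightarrow> 'b::real_normed_vector) \<Rightarrow> 'a \<Rightarrow> bool" where
  "preserves_bj_at T x \<longleftrightarrow> (\<forall>v. bj_orth x v \<longrightarrow> bj_orth (T x) (T v))"

definition supp_funcs :: "'a::real_normed_vector \<Rightarrow> ('a \<Rightarrow> real) set" where
  "supp_funcs z = {f. bounded_linear f \<and> onorm f = 1 \<and> f z = norm z}"

definition smooth_points :: "'a::real_normed_vector set" where
  "smooth_points = {z. z \<noteq> 0 \<and> (\<exists>f. supp_funcs z = {f})}"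

end

theory Submission
  imports Defs "HOL-Library.Infinite_Set"
begin
definition sublin :: "('a::real_vector \<Rightarrow> real) \<Rightarrow> bool" where
  "sublin q \<longleftrightarrow> (\<forall>a b. q (a+b) \<le> q a + q b) \<and> (\<forall>t a. t \<ge> 0 \<longrightarrow> q (t *\<^sub>R a) \<le> t * q a)"

lemma sublin_add: "sublin q \<Longrightarrow> q (a+b) \<le> q a + q b"
  by (simp add: sublin_def)

lemma sublin_scale: "sublin q \<Longrightarrow> t \<ge> 0 \<Longrightarrow> q (t *\<^sub>R a) \<le> t * q a"
  by (simp add: sublin_def)

lemma sublin_zero: assumes "sublin q" shows "q 0 = 0"
proof -
  have "q 0 \<le> q 0 + q 0" using sublin_add[OF assms, of 0 0] by simp
  moreover have "q (0 *\<^sub>R 0) \<le> 0 * q 0" using sublin_scale[OF assms, of 0 0] by simp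
  ultimately show ?thesis by simp
qed

lemma sublin_scale_eq: assumes "sublin q" "t \<ge> 0" shows "q (t *\<^sub>R a) = t * q a"
proof (cases "t = 0")
  case True then show ?thesis using sublin_zero[OF assms(1)] by simp
next
  case False
  then have tp: "t > 0" using assms(2) by simp
  have "q a = q ((1/t) *\<^sub>R (t *\<^sub>R a))" using tp by simp
  also have "\<dots> \<le> (1/t) * q (t *\<^sub>R a)" by (rule sublin_scale[OF assms(1)]) (use tp in simp)
  finally have "t * q a \<le> q (t *\<^sub>R a)" using tp by (simp add: field_simps)
  with sublin_scale[OF assms, of a] show ?thesis by linarith
qed

lemma sublin_lower: assumes "sublin q" shows "- q (- y) \<le> q y"
  using sublin_add[OF assms, of y "-y"] sublin_zero[OF assms] by simp

lemma sublin_inf: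
  fixes q :: "'a::real_vector \<Rightarrow> real" and M :: "('a \<times> real) set"
  assumes q: "sublin q" and M0: "(0,0) \<in> M"
    and Madd: "\<And>w r w' r'. (w,r) \<in> M \<Longrightarrow> (w',r') \<in> M \<Longrightarrow> (w+w', r+r') \<in> M"
    and Mscale: "\<And>w r t. (w,r) \<in> M \<Longrightarrow> t \<ge> 0 \<Longrightarrow> (t *\<^sub>R w, t*r) \<in> M"
    and Mle: "\<And>w r. (w,r) \<in> M \<Longrightarrow> r \<le> q w"
  defines "q' \<equiv> \<lambda>y. Inf ((\<lambda>(w,r). q (y+w) - r) ` M)"
  shows "sublin q'" "\<And>y. q' y \<le> q y" "\<And>y w r. (w,r) \<in> M \<Longrightarrow> q' y \<le> q (y+w) - r"
proof -
  have bdd: "bdd_below ((\<lambda>(w,r). q (y+w) - r) ` M)" for y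
  proof (rule bdd_belowI[where m="- q (-y)"], clarsimp)
    fix w r assume "(w,r) \<in> M"
    have "q w \<le> q (y+w) + q (-y)" using sublin_add[OF q, of "y+w" "-y"] by simp
    with Mle[OF \<open>(w,r) \<in> M\<close>] show "- q (-y) \<le> q (y+w) - r" by linarith
  qed
  have ne: "(\<lambda>(w,r). q (y+w) - r) ` M \<noteq> {}" for y using M0 by auto
  show le: "q' y \<le> q (y+w) - r" if "(w,r) \<in> M" for y w r
    unfolding q'_def by (rule cInf_lower[OF _ bdd]) (use that in force)
  show "q' y \<le> q y" for y using le[OF M0, of y] by simp
  have glb: "z \<le> q' y" if "\<And>w r. (w,r) \<in> M \<Longrightarrow> z \<le> q (y+w) - r" for z y
    unfolding q'_def by (rule cInf_greatest[OF ne]) (use that in auto)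
  show "sublin q'"
    unfolding sublin_def
  proof (intro conjI allI impI)
    fix a b
    have "q' (a+b) - (q (b+w2) - r2) \<le> q' a" if m2: "(w2,r2) \<in> M" for w2 r2
    proof (rule glb)
      fix w1 r1 assume m1: "(w1,r1) \<in> M"
      have "q' (a+b) \<le> q (a+b+(w1+w2)) - (r1+r2)" by (rule le[OF Madd[OF m1 m2]])
      also have "q (a+b+(w1+w2)) \<le> q (a+w1) + q (b+w2)"
        using sublin_add[OF q, of "a+w1" "b+w2"] by (simp add: algebra_simps)
      finally show "q' (a+b) - (q (b+w2) - r2) \<le> q (a+w1) - r1" by linarith
    qed
    then have "q' (a+b) - q' a \<le> q' b" by (intro glb) force
    then show "q' (a+b) \<le> q' a + q' b" by linarith
  next
    fix t :: real and a assume t: "t \<ge> 0"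
    show "q' (t *\<^sub>R a) \<le> t * q' a"
    proof (cases "t = 0")
      case True
      then show ?thesis using le[OF M0, of 0] sublin_zero[OF q] by simp
    next
      case False
      then have tp: "t > 0" using t by simp
      have "q' (t *\<^sub>R a) / t \<le> q' a"
      proof (rule glb)
        fix w r assume m: "(w,r) \<in> M"
        have "q' (t *\<^sub>R a) \<le> q (t *\<^sub>R a + t *\<^sub>R w) - t * r" by (rule le[OF Mscale[OF m t]])
        also have "q (t *\<^sub>R a + t *\<^sub>R w) \<le> t * q (a + w)"
          using sublin_scale[OF q t, of "a+w"] by (simp add: scaleR_right_distrib)
        finally have "q' (t *\<^sub>R a) \<le> t * (q (a+w) - r)" by (simp add: algebra_simps)
        then show "q' (t *\<^sub>R a) / t \<le> q (a+w) - r" using tp by (simp add: field_simps)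
      qed
      then show ?thesis using tp by (simp add: field_simps)
    qed
  qed
qed


lemma minimal_linear:
  fixes m :: "'a::real_vector \<Rightarrow> real"
  assumes m: "sublin m"
    and mini: "\<And>q. sublin q \<Longrightarrow> (\<forall>y. q y \<le> m y) \<Longrightarrow> q = m"
  shows "linear m"
proof -
  have sup: "m y + m z \<le> m (y + z)" for y z
  proof -
    define M where "M = {(t *\<^sub>R z, t * m z) | t. t \<ge> 0}"
    define q' where "q' = (\<lambda>y. Inf ((\<lambda>(w,r). m (y+w) - r) ` M))"
    have M0: "(0,0) \<in> M" unfolding M_def by (auto intro!: exI[of _ 0])
    have Madd: "(w+w', r+r') \<in> M" if "(w,r) \<in> M" "(w',r') \<in> M" for w r w' r'
      using that unfolding M_def
      by clarsimp (metis add_nonneg_nonneg distrib_right scaleR_left_distrib)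
    have Msc: "(t *\<^sub>R w, t*r) \<in> M" if "(w,r) \<in> M" "t \<ge> 0" for w r t
      using that unfolding M_def by clarsimp (metis mult.assoc mult_nonneg_nonneg)
    have Mle: "r \<le> m w" if "(w,r) \<in> M" for w r
      using that sublin_scale_eq[OF m] unfolding M_def by auto
    have S1: "sublin q'" unfolding q'_def
      by (rule sublin_inf(1)[of m M]) (auto intro: m M0 Madd Msc Mle)
    have S2: "q' y \<le> m y" for y unfolding q'_def
      by (rule sublin_inf(2)[of m M]) (auto intro: m M0 Madd Msc Mle)
    have S3: "q' y \<le> m (y+w) - r" if "(w,r) \<in> M" for y w r unfolding q'_def
      by (rule sublin_inf(3)[of m M]) (auto intro: m M0 Madd Msc Mle that)
    have "q' = m" using mini[OF S1] S2 by blast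
    then have "m y \<le> m (y + 1 *\<^sub>R z) - 1 * m z"
      using S3[of "1 *\<^sub>R z" "1 * m z" y] unfolding M_def by force
    then show ?thesis by simp
  qed
  have add: "m (y + z) = m y + m z" for y z
    using sup[of y z] sublin_add[OF m, of y z] by linarith
  have neg: "m (- y) = - m y" for y
    using add[of y "-y"] sublin_zero[OF m] by simp
  have sc: "m (c *\<^sub>R y) = c * m y" for c y
  proof (cases "c \<ge> 0")
    case True then show ?thesis by (rule sublin_scale_eq[OF m])
  next
    case False
    have "m (c *\<^sub>R y) = m (- ((-c) *\<^sub>R y))" by simp
    also have "\<dots> = - ((-c) * m y)" using neg sublin_scale_eq[OF m, of "-c" y] False by simp
    finally show ?thesis by simp
  qed
  show ?thesis by (rule linearI) (simp_all add: add sc)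
qed

lemma sublin_linear_below:
  fixes p :: "'a::real_vector \<Rightarrow> real"
  assumes p: "sublin p"
  shows "\<exists>F. linear F \<and> (\<forall>y. F y \<le> p y)"
proof -
  define S where "S = {q. sublin q \<and> (\<forall>y. q y \<le> p y)}"
  define r where "r = {(q1,q2). q1 \<in> S \<and> q2 \<in> S \<and> (\<forall>y. q2 y \<le> q1 y)}"
  have Fr: "Field r = S"
    unfolding Field_def r_def by auto
  have po: "Partial_order r"
    unfolding partial_order_on_def preorder_on_def refl_on_def antisym_def trans_def Fr
  proof (intro conjI allI impI ballI)
    show "r \<subseteq> S \<times> S" unfolding r_def by auto
    show "(x, x) \<in> r" if "x \<in> S" for x using that unfolding r_def by auto
    show "(x, z) \<in> r" if "(x, y) \<in> r" "(y, z) \<in> r" for x y z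
      using that unfolding r_def by (auto intro: order_trans)
    show "x = y" if "(x, y) \<in> r" "(y, x) \<in> r" for x y
      using that unfolding r_def by (auto intro!: ext intro: order_antisym)
  qed
  have ub: "\<exists>u\<in>Field r. \<forall>a\<in>C. (a, u) \<in> r" if C: "C \<in> Chains r" for C
  proof (cases "C = {}")
    case True
    then show ?thesis using p by (auto simp: Fr S_def)
  next
    case False
    have CS: "C \<subseteq> S" using C unfolding Chains_def r_def by auto
    define u where "u = (\<lambda>y. Inf ((\<lambda>q. q y) ` C))"
    have bdd: "bdd_below ((\<lambda>q. q y) ` C)" for y
    proof (rule bdd_belowI[where m="- p (-y)"], clarsimp)
      fix q assume "q \<in> C"
      then have "sublin q" "q (-y) \<le> p (-y)" using CS S_def by auto
      then show "- p (-y) \<le> q y" using sublin_lower[of q y] by linarith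
    qed
    have le: "u y \<le> q y" if "q \<in> C" for q y
      unfolding u_def by (rule cInf_lower[OF _ bdd]) (use that in auto)
    have glb: "z \<le> u y" if "\<And>q. q \<in> C \<Longrightarrow> z \<le> q y" for z y
      unfolding u_def by (rule cInf_greatest) (use that False in auto)
    have "sublin u"
      unfolding sublin_def
    proof (intro conjI allI impI)
      fix a b
      have "u (a+b) - q2 b \<le> u a" if q2: "q2 \<in> C" for q2
      proof (rule glb)
        fix q1 assume q1: "q1 \<in> C"
        have "(q1,q2) \<in> r \<or> (q2,q1) \<in> r" using C q1 q2 unfolding Chains_def by auto
        then obtain q where q: "q \<in> C" "\<forall>y. q y \<le> q1 y" "\<forall>y. q y \<le> q2 y"
          using q1 q2 unfolding r_def by auto
        have "sublin q" using q CS S_def by auto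
        have "u (a+b) \<le> q (a+b)" by (rule le[OF q(1)])
        also have "\<dots> \<le> q a + q b" by (rule sublin_add[OF \<open>sublin q\<close>])
        also have "\<dots> \<le> q1 a + q2 b" using q by (simp add: add_mono)
        finally show "u (a+b) - q2 b \<le> q1 a" by simp
      qed
      then have "u (a+b) - u a \<le> u b" by (intro glb) force
      then show "u (a+b) \<le> u a + u b" by simp
    next
      fix t :: real and a assume t: "t \<ge> 0"
      show "u (t *\<^sub>R a) \<le> t * u a"
      proof (cases "t = 0")
        case True
        obtain q where "q \<in> C" using False by auto
        then have "sublin q" using CS S_def by auto
        then show ?thesis using le[OF \<open>q \<in> C\<close>, of 0] True sublin_zero[OF \<open>sublin q\<close>] by simp
      next
        case tn: False
        then have tp: "t > 0" using t by simp
        have "u (t *\<^sub>R a) / t \<le> u a"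
        proof (rule glb)
          fix q assume q: "q \<in> C"
          then have "sublin q" using CS S_def by auto
          have "u (t *\<^sub>R a) \<le> t * q a" using le[OF q] sublin_scale[OF \<open>sublin q\<close> t] order_trans by blast
          then show "u (t *\<^sub>R a) / t \<le> q a" using tp by (simp add: field_simps)
        qed
        then show ?thesis using tp by (simp add: field_simps)
      qed
    qed
    moreover obtain q0 where "q0 \<in> C" using False by auto
    then have "\<forall>y. u y \<le> p y"
    proof (intro allI)
      fix y assume "q0 \<in> C"
      then have "q0 y \<le> p y" using CS unfolding S_def by auto
      then show "u y \<le> p y" using le[OF \<open>q0 \<in> C\<close>, of y] by linarith
    qed
    ultimately have uS: "u \<in> S" unfolding S_def by auto
    show ?thesis
    proof (rule bexI[of _ u])
      show "u \<in> Field r" using uS Fr by simp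
      show "\<forall>a\<in>C. (a, u) \<in> r" using uS CS le unfolding r_def by auto
    qed
  qed
  obtain m where mS: "m \<in> Field r" and mini: "\<forall>a\<in>Field r. (m, a) \<in> r \<longrightarrow> a = m"
    using Zorns_po_lemma[OF po ub] by blast
  have "sublin m" "\<forall>y. m y \<le> p y" using mS Fr S_def by auto
  have "linear m"
  proof (rule minimal_linear[OF \<open>sublin m\<close>])
    fix q assume "sublin q" "\<forall>y. q y \<le> m y"
    then have "q \<in> S" using \<open>\<forall>y. m y \<le> p y\<close> S_def order_trans by fastforce
    then have "(m, q) \<in> r" using mS Fr \<open>\<forall>y. q y \<le> m y\<close> r_def by auto
    then show "q = m" using mini \<open>q \<in> S\<close> Fr by auto
  qed
  then show ?thesis using \<open>\<forall>y. m y \<le> p y\<close> by blast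
qed


lemma sublin_norm: "sublin (norm :: 'a::real_normed_vector \<Rightarrow> real)"
  unfolding sublin_def by (auto simp: norm_triangle_ineq)

lemma HB_main:
  fixes x v :: "'a::real_normed_vector" and c :: real
  assumes dom: "\<And>s t. s * norm x + t * c \<le> norm (s *\<^sub>R x + t *\<^sub>R v)"
  shows "\<exists>g. linear g \<and> (\<forall>y. g y \<le> norm y) \<and> g x = norm x \<and> g v = c"
proof -
  define M where "M = {(s *\<^sub>R x + t *\<^sub>R v, s * norm x + t * c) | s t. True}"
  define q where "q = (\<lambda>y. Inf ((\<lambda>(w,r). norm (y+w) - r) ` M))"
  have M: "(s *\<^sub>R x + t *\<^sub>R v, s * norm x + t * c) \<in> M" for s t
    unfolding M_def by blast
  have M0: "(0,0) \<in> M" using M[of 0 0] by simp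
  have Madd: "(w+w', r+r') \<in> M" if A: "(w,r) \<in> M" and B: "(w',r') \<in> M" for w r w' r'
  proof -
    obtain s t where "w = s *\<^sub>R x + t *\<^sub>R v" "r = s * norm x + t * c"
      using A unfolding M_def by blast
    moreover obtain s' t' where "w' = s' *\<^sub>R x + t' *\<^sub>R v" "r' = s' * norm x + t' * c"
      using B unfolding M_def by blast
    ultimately
    show ?thesis using M[of "s+s'" "t+t'"]
      by (simp add: algebra_simps scaleR_left_distrib)
  qed
  have Msc: "(k *\<^sub>R w, k*r) \<in> M" if A: "(w,r) \<in> M" and "k \<ge> 0" for w r k
  proof -
    obtain s t where "w = s *\<^sub>R x + t *\<^sub>R v" "r = s * norm x + t * c"
      using A unfolding M_def by blast
    moreover have "((k * s) *\<^sub>R x + (k * t) *\<^sub>R v, (k * s) * norm x + (k * t) * c) \<in> M"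
      by (rule M)
    ultimately show ?thesis by (simp add: algebra_simps)
  qed
  have Mle: "r \<le> norm w" if "(w,r) \<in> M" for w r
    using that dom unfolding M_def by blast
  have S1: "sublin q" unfolding q_def
    by (rule sublin_inf(1)[of norm M]) (auto intro: sublin_norm M0 Madd Msc Mle)
  have S2: "q y \<le> norm y" for y unfolding q_def
    by (rule sublin_inf(2)[of norm M]) (auto intro: sublin_norm M0 Madd Msc Mle)
  have S3: "q y \<le> norm (y+w) - r" if "(w,r) \<in> M" for y w r unfolding q_def
    by (rule sublin_inf(3)[of norm M]) (auto intro: sublin_norm M0 Madd Msc Mle that)
  obtain F where F: "linear F" "\<forall>y. F y \<le> q y"
    using sublin_linear_below[OF S1] by blast
  have "F x \<le> norm x" using F(2) S3[OF M[of "-1" 0], of x] by simp (smt (verit))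
  moreover have "F (-x) \<le> - norm x" using F(2) S3[OF M[of 1 0], of "-x"] by simp (smt (verit))
  moreover have "F v \<le> c" using F(2) S3[OF M[of 0 "-1"], of v] by simp (smt (verit))
  moreover have "F (-v) \<le> - c" using F(2) S3[OF M[of 0 1], of "-v"] by simp (smt (verit))
  ultimately have "F x = norm x" "F v = c" using linear_neg[OF F(1)] by fastforce+
  then show ?thesis using F S2 order_trans by blast
qed

lemma supp_member:
  fixes g :: "'a::real_normed_vector \<Rightarrow> real"
  assumes g: "linear g" "\<forall>y. g y \<le> norm y" "g x = norm x" and x: "x \<noteq> 0"
  shows "g \<in> supp_funcs x"
proof -
  have ab: "\<bar>g y\<bar> \<le> norm y" for y
    using g(2)[rule_format, of y] g(2)[rule_format, of "-y"] linear_neg[OF g(1), of y] by simp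
  have bl: "bounded_linear g"
    by (rule bounded_linear_intro[where K=1]) (use g(1) ab in \<open>simp_all add: linear_add linear_scale\<close>)
  have "onorm g \<le> 1" by (rule onorm_bound) (use ab in simp_all)
  moreover have "norm (g x) / norm x \<le> onorm g" by (rule le_onorm[OF bl])
  ultimately have "onorm g = 1" using g(3) x by simp
  then show ?thesis unfolding supp_funcs_def using bl g(3) by simp
qed

lemma orth_dom:
  fixes x w :: "'a::real_normed_vector"
  assumes "bj_orth x w"
  shows "\<bar>\<alpha>\<bar> * norm x \<le> norm (\<alpha> *\<^sub>R x + t *\<^sub>R w)"
proof (cases "\<alpha> = 0")
  case True then show ?thesis by simp
next
  case False
  have "\<alpha> *\<^sub>R x + t *\<^sub>R w = \<alpha> *\<^sub>R (x + (t/\<alpha>) *\<^sub>R w)" using False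
    by (simp add: scaleR_right_distrib)
  then have "norm (\<alpha> *\<^sub>R x + t *\<^sub>R w) = \<bar>\<alpha>\<bar> * norm (x + (t/\<alpha>) *\<^sub>R w)" by simp
  moreover have "norm x \<le> norm (x + (t/\<alpha>) *\<^sub>R w)" using assms unfolding bj_orth_def by blast
  ultimately show ?thesis by (simp add: mult_left_mono)
qed

lemma supp_of_orth:
  fixes x v :: "'a::real_normed_vector"
  assumes "x \<noteq> 0" "bj_orth x (v - a *\<^sub>R x)"
  shows "\<exists>g\<in>supp_funcs x. g v = a * norm x"
proof -
  have "s * norm x + t * (a * norm x) \<le> norm (s *\<^sub>R x + t *\<^sub>R v)" for s t
  proof -
    have "s * norm x + t * (a * norm x) \<le> \<bar>s + t*a\<bar> * norm x"
      by (metis abs_ge_self distrib_right mult.assoc mult_right_mono norm_ge_zero)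
    also have "\<dots> \<le> norm ((s + t*a) *\<^sub>R x + t *\<^sub>R (v - a *\<^sub>R x))" by (rule orth_dom[OF assms(2)])
    also have "(s + t*a) *\<^sub>R x + t *\<^sub>R (v - a *\<^sub>R x) = s *\<^sub>R x + t *\<^sub>R v"
      by (simp add: algebra_simps)
    finally show ?thesis .
  qed
  then obtain g where "linear g" "\<forall>y. g y \<le> norm y" "g x = norm x" "g v = a * norm x"
    using HB_main[of x "a * norm x" v] by blast
  then show ?thesis using supp_member assms(1) by blast
qed

lemma orth_limit:
  fixes X W :: "nat \<Rightarrow> 'a::real_normed_vector"
  assumes "X \<longlonglongrightarrow> x" "W \<longlonglongrightarrow> w" "\<And>n. bj_orth (X n) (W n)"
  shows "bj_orth x w"
  unfolding bj_orth_def
proof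
  fix t :: real
  have "(\<lambda>n. norm (X n)) \<longlonglongrightarrow> norm x" by (intro tendsto_intros assms)
  moreover have "(\<lambda>n. norm (X n + t *\<^sub>R W n)) \<longlonglongrightarrow> norm (x + t *\<^sub>R w)" by (intro tendsto_intros assms)
  moreover have "\<forall>\<^sub>F n in sequentially. norm (X n) \<le> norm (X n + t *\<^sub>R W n)"
    using assms(3) unfolding bj_orth_def by simp
  ultimately show "norm x \<le> norm (x + t *\<^sub>R w)"
    using tendsto_le[OF trivial_limit_sequentially] by blast
qed

theorem mainTheorem2:
  fixes T :: "'a::banach \<Rightarrow> 'b::banach" and A :: "'a set"
  assumes "bounded_linear T"
    and "\<forall>x\<in>A. preserves_bj_at T x"
  shows "\<forall>x\<in>closure A \<inter> smooth_points. preserves_bj_at T x"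
proof
  fix x assume xA: "x \<in> closure A \<inter> smooth_points"
  then have x0: "x \<noteq> 0" and "\<exists>f. supp_funcs x = {f}" unfolding smooth_points_def by auto
  then obtain f where f: "supp_funcs x = {f}" by blast
  obtain X where XA: "\<And>n. X n \<in> A" and Xx: "X \<longlonglongrightarrow> x"
    using xA closure_sequential by blast
  have "\<forall>n. \<exists>g. linear g \<and> (\<forall>y. g y \<le> norm y) \<and> g (X n) = norm (X n)"
  proof
    fix n
    have "s * norm (X n) + t * 0 \<le> norm (s *\<^sub>R X n + t *\<^sub>R 0)" for s t
      by (simp add: mult_right_mono)
    then show "\<exists>g. linear g \<and> (\<forall>y. g y \<le> norm y) \<and> g (X n) = norm (X n)"
      using HB_main[of "X n" 0 0] by blast
  qed
  then obtain G where G: "\<And>n. linear (G n)" "\<And>n y. G n y \<le> norm y" "\<And>n. G n (X n) = norm (X n)"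
    by metis
  have Gabs: "\<bar>G n y\<bar> \<le> norm y" for n y
    using G(2)[of n y] G(2)[of n "-y"] linear_neg[OF G(1), of n y] by simp
  show "preserves_bj_at T x"
    unfolding preserves_bj_at_def
  proof (intro allI impI)
    fix v assume xv: "bj_orth x v"
    define b where "b n = G n v" for n
    define V where "V n = v - (b n / norm (X n)) *\<^sub>R X n" for n
    have orth: "bj_orth (X n) (V n)" for n
    proof (cases "X n = 0")
      case True then show ?thesis by (simp add: bj_orth_def)
    next
      case False
      show ?thesis unfolding bj_orth_def
      proof
        fix t :: real
        have "G n (X n + t *\<^sub>R V n) = norm (X n)"
          using False G(3)[of n] unfolding V_def b_def
          by (simp add: linear_add[OF G(1)] linear_scale[OF G(1)] linear_diff[OF G(1)])
        then show "norm (X n) \<le> norm (X n + t *\<^sub>R V n)" using G(2) by metis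
      qed
    qed
    have Vlim: "(V \<circ> r) \<longlonglongrightarrow> v - (c / norm x) *\<^sub>R x"
      if "strict_mono r" "(b \<circ> r) \<longlonglongrightarrow> c" for r c
    proof -
      have "(X \<circ> r) \<longlonglongrightarrow> x" using LIMSEQ_subseq_LIMSEQ[OF Xx that(1)] .
      then have "(\<lambda>n. v - (b (r n) / norm (X (r n))) *\<^sub>R X (r n)) \<longlonglongrightarrow> v - (c / norm x) *\<^sub>R x"
        using that(2) x0 by (intro tendsto_intros) (auto simp: o_def)
      then show ?thesis by (simp add: V_def o_def)
    qed
    have bconv: "b \<longlonglongrightarrow> 0"
    proof (rule ccontr)
      assume "\<not> b \<longlonglongrightarrow> 0"
      then obtain \<epsilon> where ep: "\<epsilon> > 0" and fr: "\<forall>no. \<exists>n\<ge>no. \<epsilon> \<le> \<bar>b n\<bar>"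
        unfolding LIMSEQ_iff by (auto simp: not_less)
      define Sset where "Sset = {n. \<epsilon> \<le> \<bar>b n\<bar>}"
      have inf: "infinite Sset" unfolding Sset_def infinite_nat_iff_unbounded_le using fr by auto
      define r where "r = enumerate Sset"
      have r: "strict_mono r" "\<And>k. \<epsilon> \<le> \<bar>b (r k)\<bar>"
        using strict_mono_enumerate[OF inf] enumerate_in_set[OF inf] unfolding r_def Sset_def by auto
      have "\<forall>k. (b \<circ> r) k \<in> {-norm v..norm v}"
      proof
        fix k show "(b \<circ> r) k \<in> {-norm v..norm v}"
          using Gabs[of "r k" v] unfolding b_def by (simp add: abs_le_iff)
      qed
      then obtain c s where c: "strict_mono s" "((b \<circ> r) \<circ> s) \<longlonglongrightarrow> c"
        using seq_compactE[OF compact_imp_seq_compact[OF compact_Icc]] by metis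
      have rs: "strict_mono (r \<circ> s)" using r(1) c(1) by (simp add: strict_mono_o)
      have bc: "(b \<circ> (r \<circ> s)) \<longlonglongrightarrow> c" using c(2) by (simp add: o_assoc)
      have "\<epsilon> \<le> \<bar>c\<bar>"
      proof (rule tendsto_le[OF trivial_limit_sequentially])
        show "(\<lambda>k. \<bar>(b \<circ> (r \<circ> s)) k\<bar>) \<longlonglongrightarrow> \<bar>c\<bar>" by (intro tendsto_intros bc)
        show "(\<lambda>k. \<epsilon>) \<longlonglongrightarrow> \<epsilon>" by simp
        show "\<forall>\<^sub>F k in sequentially. \<epsilon> \<le> \<bar>(b \<circ> (r \<circ> s)) k\<bar>" using r(2) by simp
      qed
      then have c0: "c \<noteq> 0" using ep by auto
      have "bj_orth x (v - (c / norm x) *\<^sub>R x)"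
        by (rule orth_limit[OF LIMSEQ_subseq_LIMSEQ[OF Xx rs] Vlim[OF rs bc]]) (simp add: orth)
      then obtain g where g: "g \<in> supp_funcs x" "g v = (c / norm x) * norm x"
        using supp_of_orth[OF x0] by blast
      from xv have "bj_orth x (v - 0 *\<^sub>R x)" by simp
      then obtain g0 where g0: "g0 \<in> supp_funcs x" "g0 v = 0 * norm x"
        using supp_of_orth[OF x0] by blast
      have "g = g0" using g(1) g0(1) f by auto
      then have "c = 0" using g(2) g0(2) x0 by simp
      with c0 show False by simp
    qed
    have "V \<longlonglongrightarrow> v"
      using Vlim[of id 0] bconv by (simp add: strict_mono_def)
    have "bj_orth (T x) (T v)"
    proof (rule orth_limit)
      show "(\<lambda>n. T (X n)) \<longlonglongrightarrow> T x" by (rule bounded_linear.tendsto[OF assms(1) Xx])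
      show "(\<lambda>n. T (V n)) \<longlonglongrightarrow> T v" by (rule bounded_linear.tendsto[OF assms(1) \<open>V \<longlonglongrightarrow> v\<close>])
      show "bj_orth (T (X n)) (T (V n))" for n
        using assms(2) XA orth unfolding preserves_bj_at_def by blast
    qed
    then show "bj_orth (T x) (T v)" .
  qed
qed

end
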